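(* Let $G$ be a graph, let $X$ be a partition parameter defined by property $x$, and let $\mathcal Y=\{Y_i\}_{i=1}^m$ be a partition of $V(G)$ having property $x$ such that $|\mathcal Y|=X(G)$. Then the following are equivalent: (1) $\mathcal{R}^{\mathrm{TE}}_X(G)\cong K_{|Y_1|}\,\square\,\cdots\,\square\,K_{|Y_m|}$; (2) $\mathcal{R}^{\mathrm{TS}}_X(G)\cong G[Y_1]\,\square\,\cdots\,\square\,G[Y_m]$; (3) $\mathcal Y$ is the unique partition of $V(G)$ having property $x$ with $|\mathcal Y|=X(G)$.
   Context: All graphs are finite and simple; $\square$ is the Cartesian product and $G[Y]$ the induced subgraph. A graph parameter $X$ is a partition parameter defined by property $x$ if for every graph $G$, $X(G)$ equals either (for every graph) the maximum, or (for every graph) the minimum, of $|\mathcal Y|$ over partitions $\mathcal Y$ of $V(G)$ having property $x$ in $G$. A set $B\subseteq V(G)$ is a transversal of a partition $\mathcal Y$ if $|Y\cap B|=1$ for every $Y\in\mathcal Y$. For a partition parameter $X$, the reconfiguration graphs are those of the associated transversal vertex parameter: $\mathcal{R}^{\mathrm{TE}}_X(G)$ has as vertices all transversals $B$ of partitions of $V(G)$ having property $x$ with $|B|=X(G)$, and $B_1B_2$ is an edge iff there exist $v_1\in B_1\setminus B_2$, $v_2\in B_2\setminus B_1$ with $B_1\setminus\{v_1\}=B_2\setminus\{v_2\}$; $\mathcal{R}^{\mathrm{TS}}_X(G)$ has the same vertex set, with the additional adjacency requirement $v_1v_2\in E(G)$. *)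

theory Defs
  imports Main "HOL-Library.FuncSet" "HOL-Library.Disjoint_Sets"
begin

type_synonym 'a graph = "'a set \<times> 'a set set"

definition verts :: "'a graph \<Rightarrow> 'a set" where "verts G = fst G"
definition edges :: "'a graph \<Rightarrow> 'a set set" where "edges G = snd G"

definition graph :: "'a graph \<Rightarrow> bool" where
  "graph G \<longleftrightarrow> finite (verts G) \<and>
     (\<forall>e\<in>edges G. \<exists>u v. e = {u, v} \<and> u \<noteq> v \<and> u \<in> verts G \<and> v \<in> verts G)"

definition adj :: "'a graph \<Rightarrow> 'a \<Rightarrow> 'a \<Rightarrow> bool" where
  "adj G u v \<longleftrightarrow> {u, v} \<in> edges G"

definition induced :: "'a graph \<Rightarrow> 'a set \<Rightarrow> 'a graph" where
  "induced G Y = (Y, {e \<in> edges G. e \<subseteq> Y})"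

definition complete :: "nat \<Rightarrow> nat graph" where
  "complete n = ({0..<n}, {{i, j} | i j. i < n \<and> j < n \<and> i \<noteq> j})"

definition cart_prod :: "'i set \<Rightarrow> ('i \<Rightarrow> 'a graph) \<Rightarrow> ('i \<Rightarrow> 'a) graph" where
  "cart_prod I Gs =
    (PiE I (\<lambda>i. verts (Gs i)),
     {{f, g} | f g. f \<in> PiE I (\<lambda>i. verts (Gs i)) \<and> g \<in> PiE I (\<lambda>i. verts (Gs i)) \<and>
        (\<exists>i\<in>I. adj (Gs i) (f i) (g i) \<and> (\<forall>j\<in>I. j \<noteq> i \<longrightarrow> f j = g j))})"

definition iso :: "'a graph \<Rightarrow> 'b graph \<Rightarrow> bool" where
  "iso G H \<longleftrightarrow> (\<exists>h. bij_betw h (verts G) (verts H) \<and>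
     (\<forall>u\<in>verts G. \<forall>v\<in>verts G. adj G u v \<longleftrightarrow> adj H (h u) (h v)))"

definition part_sizes :: "('a graph \<Rightarrow> 'a set set \<Rightarrow> bool) \<Rightarrow> 'a graph \<Rightarrow> nat set" where
  "part_sizes x G = {card P | P. partition_on (verts G) P \<and> x G P}"

definition partition_param :: "('a graph \<Rightarrow> nat) \<Rightarrow> ('a graph \<Rightarrow> 'a set set \<Rightarrow> bool) \<Rightarrow> bool" where
  "partition_param X x \<longleftrightarrow>
     (\<forall>G. graph G \<longrightarrow> X G \<in> part_sizes x G \<and> (\<forall>n\<in>part_sizes x G. n \<le> X G)) \<or>
     (\<forall>G. graph G \<longrightarrow> X G \<in> part_sizes x G \<and> (\<forall>n\<in>part_sizes x G. X G \<le> n))"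

definition transversal :: "'a graph \<Rightarrow> 'a set set \<Rightarrow> 'a set \<Rightarrow> bool" where
  "transversal G P B \<longleftrightarrow> B \<subseteq> verts G \<and> (\<forall>Y\<in>P. card (Y \<inter> B) = 1)"

definition reconf_verts ::
  "('a graph \<Rightarrow> nat) \<Rightarrow> ('a graph \<Rightarrow> 'a set set \<Rightarrow> bool) \<Rightarrow> 'a graph \<Rightarrow> 'a set set" where
  "reconf_verts X x G = {B. card B = X G \<and>
     (\<exists>P. partition_on (verts G) P \<and> x G P \<and> transversal G P B)}"

definition R_TE ::
  "('a graph \<Rightarrow> nat) \<Rightarrow> ('a graph \<Rightarrow> 'a set set \<Rightarrow> bool) \<Rightarrow> 'a graph \<Rightarrow> 'a set graph" where
  "R_TE X x G = (reconf_verts X x G,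
     {{B1, B2} | B1 B2. B1 \<in> reconf_verts X x G \<and> B2 \<in> reconf_verts X x G \<and>
        (\<exists>v1\<in>B1 - B2. \<exists>v2\<in>B2 - B1. B1 - {v1} = B2 - {v2})})"

definition R_TS ::
  "('a graph \<Rightarrow> nat) \<Rightarrow> ('a graph \<Rightarrow> 'a set set \<Rightarrow> bool) \<Rightarrow> 'a graph \<Rightarrow> 'a set graph" where
  "R_TS X x G = (reconf_verts X x G,
     {{B1, B2} | B1 B2. B1 \<in> reconf_verts X x G \<and> B2 \<in> reconf_verts X x G \<and>
        (\<exists>v1\<in>B1 - B2. \<exists>v2\<in>B2 - B1. B1 - {v1} = B2 - {v2} \<and> adj G v1 v2)})"

end

theory Submission
  imports Defs
begin

lemma part_uniq:
  assumes "partition_on V P" "Q \<in> P" "Q' \<in> P" "v \<in> Q" "v \<in> Q'"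
  shows "Q = Q'"
  using assms unfolding partition_on_def disjoint_def by blast

lemma part_ex:
  assumes "partition_on V P" "v \<in> V"
  obtains Q where "Q \<in> P" "v \<in> Q"
  using assms unfolding partition_on_def by blast

lemma part_sub:
  assumes "partition_on V P" "Q \<in> P"
  shows "Q \<subseteq> V" "Q \<noteq> {}"
  using assms unfolding partition_on_def by blast+

lemma part_fin:
  assumes "partition_on V P" "finite V"
  shows "finite P"
proof -
  have "P \<subseteq> Pow V" using assms(1) unfolding partition_on_def by blast
  then show ?thesis using assms(2) finite_subset by blast
qed

lemma trans_card:
  assumes "partition_on V P" "finite V" "B \<subseteq> V" "\<forall>Q\<in>P. card (Q \<inter> B) = 1"
  shows "card B = card P"
proof -
  have fP: "finite P" using part_fin assms by blast
  have e: "B = \<Union>((\<lambda>Q. Q \<inter> B) ` P)" using assms(1,3) unfolding partition_on_def by blast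
  have "card (\<Union>((\<lambda>Q. Q \<inter> B) ` P)) = (\<Sum>Q\<in>P. card (Q \<inter> B))"
    apply (rule card_UN_disjoint[OF fP])
    using assms finite_subset apply blast
    using part_uniq[OF assms(1)] by blast
  then have "card B = (\<Sum>Q\<in>P. card (Q \<inter> B))" using e by simp
  also have "\<dots> = card P" using assms(4) by simp
  finally show ?thesis .
qed

definition sel :: "'a set \<Rightarrow> 'a set \<Rightarrow> 'a" where "sel Y B = the_elem (Y \<inter> B)"

lemma sel_eq:
  assumes "card (Y \<inter> B) = 1"
  shows "Y \<inter> B = {sel Y B}"
proof -
  obtain z where "Y \<inter> B = {z}" using card_1_singletonE[OF assms] by blast
  then show ?thesis unfolding sel_def by simp
qed

lemma adj_sym: "adj G u v \<longleftrightarrow> adj G v u"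
  unfolding adj_def by (simp add: insert_commute)

lemma adj_complete: "adj (complete n) i j \<longleftrightarrow> i < n \<and> j < n \<and> i \<noteq> j"
  unfolding adj_def complete_def edges_def by (auto simp: doubleton_eq_iff)

lemma adj_induced: "adj (induced G Y) u v \<longleftrightarrow> adj G u v \<and> u \<in> Y \<and> v \<in> Y"
  unfolding adj_def induced_def edges_def by auto

lemma adj_cart:
  assumes "f \<in> PiE I (\<lambda>i. verts (Gs i))" "g \<in> PiE I (\<lambda>i. verts (Gs i))"
  shows "adj (cart_prod I Gs) f g \<longleftrightarrow>
     (\<exists>i\<in>I. adj (Gs i) (f i) (g i) \<and> (\<forall>j\<in>I. j \<noteq> i \<longrightarrow> f j = g j))"
proof
  assume "adj (cart_prod I Gs) f g"
  then obtain f' g' where e: "{f, g} = {f', g'}" and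
    c: "\<exists>i\<in>I. adj (Gs i) (f' i) (g' i) \<and> (\<forall>j\<in>I. j \<noteq> i \<longrightarrow> f' j = g' j)"
    unfolding adj_def cart_prod_def edges_def by auto
  from e have "(f = f' \<and> g = g') \<or> (f = g' \<and> g = f')" by (auto simp: doubleton_eq_iff)
  then show "\<exists>i\<in>I. adj (Gs i) (f i) (g i) \<and> (\<forall>j\<in>I. j \<noteq> i \<longrightarrow> f j = g j)"
    using c adj_sym by metis
next
  assume "\<exists>i\<in>I. adj (Gs i) (f i) (g i) \<and> (\<forall>j\<in>I. j \<noteq> i \<longrightarrow> f j = g j)"
  then show "adj (cart_prod I Gs) f g"
    using assms unfolding adj_def cart_prod_def edges_def by auto
qed

lemma verts_cart: "verts (cart_prod I Gs) = PiE I (\<lambda>i. verts (Gs i))"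
  unfolding cart_prod_def verts_def by simp

lemma adj_setgraph:
  assumes "\<And>B1 B2. c B1 B2 \<Longrightarrow> c B2 B1" "B1 \<in> S" "B2 \<in> S"
  shows "adj (S, {{B1, B2} | B1 B2. B1 \<in> S \<and> B2 \<in> S \<and> c B1 B2}) B1 B2 \<longleftrightarrow> c B1 B2"
  using assms unfolding adj_def edges_def by (auto simp: doubleton_eq_iff)

lemma sel_props:
  assumes "transversal G Ys B" "Y \<in> Ys"
  shows "sel Y B \<in> Y" "sel Y B \<in> B" "\<And>v. v \<in> Y \<Longrightarrow> v \<in> B \<Longrightarrow> v = sel Y B"
proof -
  have "Y \<inter> B = {sel Y B}" using assms sel_eq unfolding transversal_def by blast
  then show "sel Y B \<in> Y" "sel Y B \<in> B" "\<And>v. v \<in> Y \<Longrightarrow> v \<in> B \<Longrightarrow> v = sel Y B" by auto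
qed

lemma KL:
  assumes P: "partition_on (verts G) Ys"
    and T1: "transversal G Ys B1" and T2: "transversal G Ys B2"
  shows "(\<exists>v1\<in>B1 - B2. \<exists>v2\<in>B2 - B1. B1 - {v1} = B2 - {v2} \<and> r v1 v2) \<longleftrightarrow>
     (\<exists>Y\<in>Ys. r (sel Y B1) (sel Y B2) \<and> sel Y B1 \<noteq> sel Y B2 \<and>
        (\<forall>Y'\<in>Ys. Y' \<noteq> Y \<longrightarrow> sel Y' B1 = sel Y' B2))"
proof
  assume "\<exists>v1\<in>B1 - B2. \<exists>v2\<in>B2 - B1. B1 - {v1} = B2 - {v2} \<and> r v1 v2"
  then obtain v1 v2 where v1: "v1 \<in> B1" "v1 \<notin> B2" and v2: "v2 \<in> B2" "v2 \<notin> B1"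
    and eq: "B1 - {v1} = B2 - {v2}" and r: "r v1 v2" by blast
  have "v1 \<in> verts G" using v1 T1 unfolding transversal_def by blast
  then obtain Y where Y: "Y \<in> Ys" "v1 \<in> Y" using part_ex[OF P] by blast
  have s1: "sel Y B1 = v1" using sel_props(3)[OF T1 Y(1) Y(2) v1(1)] by simp
  have w: "sel Y B2 \<in> Y" "sel Y B2 \<in> B2" using sel_props(1,2)[OF T2 Y(1)] by auto
  have s2: "sel Y B2 = v2"
  proof (rule ccontr)
    assume "sel Y B2 \<noteq> v2"
    then have "sel Y B2 \<in> B2 - {v2}" using w by simp
    then have "sel Y B2 \<in> B1 - {v1}" using eq by simp
    then show False using sel_props(3)[OF T1 Y(1) w(1)] s1 by blast
  qed
  have "\<forall>Y'\<in>Ys. Y' \<noteq> Y \<longrightarrow> sel Y' B1 = sel Y' B2"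
  proof (intro ballI impI)
    fix Y' assume Y': "Y' \<in> Ys" "Y' \<noteq> Y"
    have u: "sel Y' B1 \<in> Y'" "sel Y' B1 \<in> B1" using sel_props(1,2)[OF T1 Y'(1)] by auto
    have "sel Y' B1 \<noteq> v1"
    proof
      assume "sel Y' B1 = v1"
      then have "v1 \<in> Y'" using u(1) by simp
      then show False using part_uniq[OF P Y(1) Y'(1) Y(2)] Y'(2) by simp
    qed
    then have "sel Y' B1 \<in> B1 - {v1}" using u by simp
    then have "sel Y' B1 \<in> B2 - {v2}" using eq by simp
    then have "sel Y' B1 \<in> B2" by simp
    then show "sel Y' B1 = sel Y' B2" using sel_props(3)[OF T2 Y'(1) u(1)] by blast
  qed
  then show "\<exists>Y\<in>Ys. r (sel Y B1) (sel Y B2) \<and> sel Y B1 \<noteq> sel Y B2 \<and>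
        (\<forall>Y'\<in>Ys. Y' \<noteq> Y \<longrightarrow> sel Y' B1 = sel Y' B2)"
    using Y s1 s2 r v1 v2 by (intro bexI[of _ Y]) auto
next
  assume "\<exists>Y\<in>Ys. r (sel Y B1) (sel Y B2) \<and> sel Y B1 \<noteq> sel Y B2 \<and>
        (\<forall>Y'\<in>Ys. Y' \<noteq> Y \<longrightarrow> sel Y' B1 = sel Y' B2)"
  then obtain Y where Y: "Y \<in> Ys" and r: "r (sel Y B1) (sel Y B2)" and ne: "sel Y B1 \<noteq> sel Y B2"
    and oth: "\<forall>Y'\<in>Ys. Y' \<noteq> Y \<longrightarrow> sel Y' B1 = sel Y' B2" by blast
  define v1 where "v1 = sel Y B1"
  define v2 where "v2 = sel Y B2"
  have a1: "v1 \<in> Y" "v1 \<in> B1" using sel_props(1,2)[OF T1 Y] unfolding v1_def by auto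
  have a2: "v2 \<in> Y" "v2 \<in> B2" using sel_props(1,2)[OF T2 Y] unfolding v2_def by auto
  have v12: "v1 \<noteq> v2" using ne by (simp add: v1_def v2_def)
  have r': "r v1 v2" using r by (simp add: v1_def v2_def)
  have n1: "v1 \<notin> B2"
  proof
    assume "v1 \<in> B2"
    then have "v1 = sel Y B2" using sel_props(3)[OF T2 Y a1(1)] by simp
    then show False using v12 v2_def by simp
  qed
  have n2: "v2 \<notin> B1"
  proof
    assume "v2 \<in> B1"
    then have "v2 = sel Y B1" using sel_props(3)[OF T1 Y a2(1)] by simp
    then show False using v12 v1_def by simp
  qed
  have sub: "B - {sel Y B} \<subseteq> B' - {sel Y B'}"
    if TB: "transversal G Ys B" and TB': "transversal G Ys B'"
      and o: "\<forall>Y'\<in>Ys. Y' \<noteq> Y \<longrightarrow> sel Y' B = sel Y' B'" for B B'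
  proof
    fix u assume u: "u \<in> B - {sel Y B}"
    have "u \<in> verts G" using u TB unfolding transversal_def by blast
    then obtain Y' where Y': "Y' \<in> Ys" "u \<in> Y'" using part_ex[OF P] by blast
    have us: "u = sel Y' B" using sel_props(3)[OF TB Y'(1) Y'(2)] u by blast
    have "Y' \<noteq> Y" using us u by blast
    then have "u = sel Y' B'" using o Y' us by auto
    then have "u \<in> B'" using sel_props(2)[OF TB' Y'(1)] by simp
    moreover have "u \<notin> Y" using part_uniq[OF P Y'(1) Y Y'(2)] \<open>Y' \<noteq> Y\<close> by blast
    ultimately show "u \<in> B' - {sel Y B'}" using sel_props(1)[OF TB' Y] by auto
  qed
  have eq: "B1 - {v1} = B2 - {v2}"
  proof (rule subset_antisym)
    show "B1 - {v1} \<subseteq> B2 - {v2}" using sub[OF T1 T2 oth] unfolding v1_def v2_def .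
    have oth': "\<forall>Y'\<in>Ys. Y' \<noteq> Y \<longrightarrow> sel Y' B2 = sel Y' B1" using oth by simp
    show "B2 - {v2} \<subseteq> B1 - {v1}" using sub[OF T2 T1 oth'] unfolding v1_def v2_def .
  qed
  then show "\<exists>v1\<in>B1 - B2. \<exists>v2\<in>B2 - B1. B1 - {v1} = B2 - {v2} \<and> r v1 v2"
    using a1(2) a2(2) n1 n2 r' eq by blast
qed

lemma trans_eq:
  assumes P: "partition_on (verts G) Ys" and T1: "transversal G Ys B1" and T2: "transversal G Ys B2"
    and e: "\<forall>Y\<in>Ys. sel Y B1 = sel Y B2"
  shows "B1 = B2"
proof -
  have "B \<subseteq> B'" if TB: "transversal G Ys B" and TB': "transversal G Ys B'"
    and e: "\<forall>Y\<in>Ys. sel Y B = sel Y B'" for B B'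
  proof
    fix u assume u: "u \<in> B"
    have "u \<in> verts G" using u TB unfolding transversal_def by blast
    then obtain Y where Y: "Y \<in> Ys" "u \<in> Y" using part_ex[OF P] by blast
    have "u = sel Y B" using sel_props(3)[OF TB Y u] .
    then have "u = sel Y B'" using e Y by simp
    then show "u \<in> B'" using sel_props(2)[OF TB' Y(1)] by simp
  qed
  then show ?thesis using T1 T2 e by (metis subset_antisym)
qed

lemma bij_phi:
  assumes P: "partition_on (verts G) Ys"
    and E: "\<forall>Y\<in>Ys. bij_betw (E Y) Y (V' Y)"
  shows "bij_betw (\<lambda>B. restrict (\<lambda>Y. E Y (sel Y B)) Ys) {B. transversal G Ys B} (PiE Ys V')"
  unfolding bij_betw_def
proof (intro conjI)
  show "inj_on (\<lambda>B. restrict (\<lambda>Y. E Y (sel Y B)) Ys) {B. transversal G Ys B}"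
  proof (rule inj_onI)
    fix B1 B2 assume T1: "B1 \<in> {B. transversal G Ys B}" and T2: "B2 \<in> {B. transversal G Ys B}"
      and eq: "restrict (\<lambda>Y. E Y (sel Y B1)) Ys = restrict (\<lambda>Y. E Y (sel Y B2)) Ys"
    have "\<forall>Y\<in>Ys. sel Y B1 = sel Y B2"
    proof
      fix Y assume Y: "Y \<in> Ys"
      have "restrict (\<lambda>Y. E Y (sel Y B1)) Ys Y = restrict (\<lambda>Y. E Y (sel Y B2)) Ys Y" using eq by simp
      then have "E Y (sel Y B1) = E Y (sel Y B2)" using Y by simp
      moreover have "sel Y B1 \<in> Y" using sel_props(1)[of G Ys B1 Y] T1 Y by simp
      moreover have "sel Y B2 \<in> Y" using sel_props(1)[of G Ys B2 Y] T2 Y by simp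
      moreover have "inj_on (E Y) Y" using E Y by (simp add: bij_betw_def)
      ultimately show "sel Y B1 = sel Y B2" by (meson inj_onD)
    qed
    then show "B1 = B2" using trans_eq[OF P, of B1 B2] T1 T2 by simp
  qed
next
  show "(\<lambda>B. restrict (\<lambda>Y. E Y (sel Y B)) Ys) ` {B. transversal G Ys B} = PiE Ys V'"
  proof
    show "(\<lambda>B. restrict (\<lambda>Y. E Y (sel Y B)) Ys) ` {B. transversal G Ys B} \<subseteq> PiE Ys V'"
    proof clarify
      fix B assume T: "transversal G Ys B"
      show "restrict (\<lambda>Y. E Y (sel Y B)) Ys \<in> PiE Ys V'"
      proof (rule restrict_PiE_iff[THEN iffD2], intro ballI)
        fix Y assume Y: "Y \<in> Ys"
        have "bij_betw (E Y) Y (V' Y)" using E Y by simp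
        then show "E Y (sel Y B) \<in> V' Y" using sel_props(1)[OF T Y] bij_betwE by blast
      qed
    qed
  next
    show "PiE Ys V' \<subseteq> (\<lambda>B. restrict (\<lambda>Y. E Y (sel Y B)) Ys) ` {B. transversal G Ys B}"
    proof
      fix f assume f: "f \<in> PiE Ys V'"
      define g where "g Y = inv_into Y (E Y) (f Y)" for Y
      have g: "g Y \<in> Y" "E Y (g Y) = f Y" if "Y \<in> Ys" for Y
      proof -
        have b: "bij_betw (E Y) Y (V' Y)" using E that by blast
        have fy: "f Y \<in> V' Y" using f that by (simp add: PiE_iff)
        show "g Y \<in> Y" unfolding g_def using b fy
          by (metis bij_betw_def inv_into_into)
        show "E Y (g Y) = f Y" unfolding g_def using b fy
          by (metis bij_betw_def f_inv_into_f)
      qed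
      define B where "B = g ` Ys"
      have int: "Y \<inter> B = {g Y}" if Y: "Y \<in> Ys" for Y
      proof
        show "{g Y} \<subseteq> Y \<inter> B" using g(1)[OF Y] Y B_def by auto
        show "Y \<inter> B \<subseteq> {g Y}"
        proof
          fix u assume u: "u \<in> Y \<inter> B"
          then obtain Y' where Y': "Y' \<in> Ys" "u = g Y'" using B_def by auto
          have "u \<in> Y'" using g(1)[OF Y'(1)] Y'(2) by simp
          then have "Y' = Y" using part_uniq[OF P Y'(1) Y] u by blast
          then show "u \<in> {g Y}" using Y' by simp
        qed
      qed
      have T: "transversal G Ys B"
        unfolding transversal_def
      proof
        show "B \<subseteq> verts G" unfolding B_def using g(1) part_sub(1)[OF P] by blast
        show "\<forall>Y\<in>Ys. card (Y \<inter> B) = 1" using int by simp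
      qed
      have "restrict (\<lambda>Y. E Y (sel Y B)) Ys = f"
      proof (rule ext)
        fix Y
        show "restrict (\<lambda>Y. E Y (sel Y B)) Ys Y = f Y"
        proof (cases "Y \<in> Ys")
          case True
          have "sel Y B = g Y" unfolding sel_def using int[OF True] by simp
          then show ?thesis using True g(2)[OF True] by simp
        next
          case False
          then show ?thesis using f by (simp add: PiE_iff extensional_def)
        qed
      qed
      then show "f \<in> (\<lambda>B. restrict (\<lambda>Y. E Y (sel Y B)) Ys) ` {B. transversal G Ys B}"
        using T by (metis (mono_tags, lifting) image_eqI mem_Collect_eq)
    qed
  qed
qed

lemma iso_generic:
  assumes P: "partition_on (verts G) Ys"
    and E: "\<forall>Y\<in>Ys. bij_betw (E Y) Y (verts (H Y))"
    and adjH: "\<forall>Y\<in>Ys. \<forall>u\<in>Y. \<forall>v\<in>Y. adj (H Y) (E Y u) (E Y v) \<longleftrightarrow> (r u v \<and> u \<noteq> v)"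
    and RV: "verts R = {B. transversal G Ys B}"
    and RA: "\<forall>B1\<in>verts R. \<forall>B2\<in>verts R. adj R B1 B2 \<longleftrightarrow>
               (\<exists>v1\<in>B1 - B2. \<exists>v2\<in>B2 - B1. B1 - {v1} = B2 - {v2} \<and> r v1 v2)"
  shows "iso R (cart_prod Ys H)"
proof -
  define phi where "phi B = restrict (\<lambda>Y. E Y (sel Y B)) Ys" for B
  have bij: "bij_betw phi (verts R) (verts (cart_prod Ys H))"
    unfolding RV verts_cart phi_def by (rule bij_phi[OF P E])
  have "adj R B1 B2 \<longleftrightarrow> adj (cart_prod Ys H) (phi B1) (phi B2)"
    if B1: "B1 \<in> verts R" and B2: "B2 \<in> verts R" for B1 B2
  proof -
  have T1: "transversal G Ys B1" and T2: "transversal G Ys B2" using B1 B2 RV by auto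
  have p1: "phi B1 \<in> PiE Ys (\<lambda>Y. verts (H Y))" and p2: "phi B2 \<in> PiE Ys (\<lambda>Y. verts (H Y))"
    using bij_betwE[OF bij[unfolded verts_cart]] B1 B2 by auto
  have step: "(adj (H Y) (phi B1 Y) (phi B2 Y) \<and> (\<forall>j\<in>Ys. j \<noteq> Y \<longrightarrow> phi B1 j = phi B2 j))
     \<longleftrightarrow> (r (sel Y B1) (sel Y B2) \<and> sel Y B1 \<noteq> sel Y B2 \<and>
        (\<forall>Y'\<in>Ys. Y' \<noteq> Y \<longrightarrow> sel Y' B1 = sel Y' B2))" if Y: "Y \<in> Ys" for Y
  proof -
    have a: "adj (H Y) (phi B1 Y) (phi B2 Y) \<longleftrightarrow> (r (sel Y B1) (sel Y B2) \<and> sel Y B1 \<noteq> sel Y B2)"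
      using adjH Y sel_props(1)[OF T1 Y] sel_props(1)[OF T2 Y] unfolding phi_def by simp
    have b: "phi B1 j = phi B2 j \<longleftrightarrow> sel j B1 = sel j B2" if j: "j \<in> Ys" for j
    proof -
      have "inj_on (E j) j" using E j by (simp add: bij_betw_def)
      then show ?thesis using sel_props(1)[OF T1 j] sel_props(1)[OF T2 j] j unfolding phi_def
        by (auto dest: inj_onD)
    qed
    show ?thesis using a b by auto
  qed
  have "adj R B1 B2 \<longleftrightarrow> (\<exists>v1\<in>B1 - B2. \<exists>v2\<in>B2 - B1. B1 - {v1} = B2 - {v2} \<and> r v1 v2)"
    using RA[rule_format, OF B1 B2] .
  also have "\<dots> \<longleftrightarrow> (\<exists>Y\<in>Ys. r (sel Y B1) (sel Y B2) \<and> sel Y B1 \<noteq> sel Y B2 \<and>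
        (\<forall>Y'\<in>Ys. Y' \<noteq> Y \<longrightarrow> sel Y' B1 = sel Y' B2))" by (rule KL[OF P T1 T2])
  also have "\<dots> \<longleftrightarrow> (\<exists>Y\<in>Ys. adj (H Y) (phi B1 Y) (phi B2 Y) \<and> (\<forall>j\<in>Ys. j \<noteq> Y \<longrightarrow> phi B1 j = phi B2 j))"
    by (rule bex_cong[OF refl], rule step[symmetric])
  also have "\<dots> \<longleftrightarrow> adj (cart_prod Ys H) (phi B1) (phi B2)"
    using adj_cart[OF p1 p2] by simp
  finally show "adj R B1 B2 \<longleftrightarrow> adj (cart_prod Ys H) (phi B1) (phi B2)" .
qed
  then show ?thesis unfolding iso_def using bij by blast
qed

lemma refine_uniq:
  assumes PP: "partition_on (verts G) P" and PY: "partition_on (verts G) Ys"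
    and fin: "finite (verts G)" and cd: "card P = card Ys"
    and tr: "\<forall>B. transversal G P B \<longrightarrow> transversal G Ys B"
  shows "P = Ys"
proof -
  have fP: "finite P" using part_fin[OF PP fin] .
  have "\<forall>Q\<in>P. \<exists>c. c \<in> Q" using part_sub(2)[OF PP] by blast
  then obtain c where c: "\<And>Q. Q \<in> P \<Longrightarrow> c Q \<in> Q" by metis
  define Bt where "Bt Q a = insert a (c ` (P - {Q}))" for Q a
  have int: "Q' \<inter> Bt Q a = (if Q' = Q then {a} else {c Q'})"
    if Q: "Q \<in> P" "a \<in> Q" and Q': "Q' \<in> P" for Q a Q'
  proof (cases "Q' = Q")
    case True
    have "\<And>Q''. Q'' \<in> P - {Q} \<Longrightarrow> c Q'' \<notin> Q"
      using c part_uniq[OF PP] Q(1) by blast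
    then show ?thesis using True Q unfolding Bt_def by auto
  next
    case False
    have an: "a \<notin> Q'" using part_uniq[OF PP Q(1) Q' Q(2)] False by blast
    have "\<And>Q''. Q'' \<in> P - {Q} \<Longrightarrow> c Q'' \<in> Q' \<Longrightarrow> Q'' = Q'"
      using c part_uniq[OF PP] Q' by blast
    then have "Q' \<inter> c ` (P - {Q}) = {c Q'}" using c[OF Q'] Q' False by auto
    then show ?thesis using False an unfolding Bt_def by auto
  qed
  have trB: "transversal G Ys (Bt Q a)" if Q: "Q \<in> P" "a \<in> Q" for Q a
  proof -
    have "Bt Q a \<subseteq> verts G" unfolding Bt_def using Q c part_sub(1)[OF PP] by blast
    moreover have "\<forall>Q'\<in>P. card (Q' \<inter> Bt Q a) = 1" using int[OF Q] by simp
    ultimately show ?thesis using tr unfolding transversal_def by blast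
  qed
  have step1: "b \<in> Y" if Q: "Q \<in> P" "a \<in> Q" "b \<in> Q" and Y: "Y \<in> Ys" "a \<in> Y" for Q a b Y
  proof (rule ccontr)
    assume nb: "b \<notin> Y"
    define w where "w = sel Y (Bt Q b)"
    have w: "w \<in> Y" "w \<in> Bt Q b" using sel_props(1,2)[OF trB[OF Q(1) Q(3)] Y(1)] w_def by auto
    have "w \<noteq> b" using w nb by blast
    then obtain Q' where Q': "Q' \<in> P - {Q}" "w = c Q'" using w(2) unfolding Bt_def by blast
    then have "w \<in> Bt Q a" unfolding Bt_def by blast
    moreover have "a \<in> Bt Q a" unfolding Bt_def by blast
    ultimately have "w = a" using sel_props(3)[OF trB[OF Q(1) Q(2)] Y(1)] w(1) Y(2) by metis
    then have "a \<in> Q'" using c Q' by auto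
    then show False using part_uniq[OF PP Q(1) _ Q(2)] Q' by blast
  qed
  define f where "f Q = (SOME Y. Y \<in> Ys \<and> c Q \<in> Y)" for Q
  have fQ: "f Q \<in> Ys" "c Q \<in> f Q" if Q: "Q \<in> P" for Q
  proof -
    have "c Q \<in> verts G" using c[OF Q] part_sub(1)[OF PP Q] by blast
    then have "\<exists>Y. Y \<in> Ys \<and> c Q \<in> Y" using part_ex[OF PY] by metis
    then show "f Q \<in> Ys" "c Q \<in> f Q" unfolding f_def by (metis (mono_tags, lifting) someI_ex)+
  qed
  have Qsub: "Q \<subseteq> f Q" if Q: "Q \<in> P" for Q
    using step1[OF Q c[OF Q] _ fQ[OF Q]] by blast
  have fuse: "f Q = Y" if Q: "Q \<in> P" and Y: "Y \<in> Ys" and a: "a \<in> Q" "a \<in> Y" for Q Y a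
    using part_uniq[OF PY fQ(1)[OF Q] Y _ a(2)] Qsub[OF Q] a(1) by blast
  have img: "f ` P = Ys"
  proof
    show "f ` P \<subseteq> Ys" using fQ by blast
    show "Ys \<subseteq> f ` P"
    proof
      fix Y assume Y: "Y \<in> Ys"
      obtain a where a: "a \<in> Y" using part_sub(2)[OF PY Y] by blast
      have "a \<in> verts G" using a part_sub(1)[OF PY Y] by blast
      then obtain Q where Q: "Q \<in> P" "a \<in> Q" using part_ex[OF PP] by blast
      have "f Q = Y" using fuse[OF Q(1) Y Q(2) a] .
      then show "Y \<in> f ` P" using Q(1) by blast
    qed
  qed
  have inj: "inj_on f P" using eq_card_imp_inj_on[OF fP, of f] img cd by simp
  have "Ys \<subseteq> P"
  proof
    fix Y assume Y: "Y \<in> Ys"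
    then obtain Q where Q: "Q \<in> P" "f Q = Y" using img by blast
    have "Y \<subseteq> Q"
    proof
      fix a assume a: "a \<in> Y"
      have "a \<in> verts G" using a part_sub(1)[OF PY Y] by blast
      then obtain Q' where Q': "Q' \<in> P" "a \<in> Q'" using part_ex[OF PP] by blast
      have "f Q' = Y" using fuse[OF Q'(1) Y Q'(2) a] .
      then have "Q' = Q" using inj Q Q'(1) by (metis inj_onD)
      then show "a \<in> Q" using Q' by simp
    qed
    then have "Y = Q" using Qsub[OF Q(1)] Q(2) by blast
    then show "Y \<in> P" using Q by simp
  qed
  then show "P = Ys" using card_subset_eq[OF fP _ cd[symmetric]] by simp
qed

lemma adj_irrefl:
  assumes g: "graph G" and a: "adj G u v" shows "u \<noteq> v"
proof
  assume "u = v"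
  then have "{u} \<in> edges G" using a unfolding adj_def by simp
  then obtain p q where "{u} = {p, q}" "p \<noteq> q" using g unfolding graph_def by blast
  then have "p \<in> {u}" "q \<in> {u}" by (metis insertI1, metis insertI1 insert_commute)
  then show False using \<open>p \<noteq> q\<close> by simp
qed

lemma adj_R_TE:
  assumes "B1 \<in> reconf_verts X x G" "B2 \<in> reconf_verts X x G"
  shows "adj (R_TE X x G) B1 B2 \<longleftrightarrow>
    (\<exists>v1\<in>B1 - B2. \<exists>v2\<in>B2 - B1. B1 - {v1} = B2 - {v2})"
proof -
  have sym: "(\<exists>v1\<in>B2 - B1. \<exists>v2\<in>B1 - B2. B2 - {v1} = B1 - {v2})"
    if "(\<exists>v1\<in>B1 - B2. \<exists>v2\<in>B2 - B1. B1 - {v1} = B2 - {v2})" for B1 B2 :: "'a set"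
  proof -
    from that obtain v1 where v1: "v1\<in>B1 - B2" and ex: "\<exists>v2\<in>B2 - B1. B1 - {v1} = B2 - {v2}" ..
    from ex obtain v2 where v2: "v2\<in>B2 - B1" and e: "B1 - {v1} = B2 - {v2}" ..
    have "B2 - {v2} = B1 - {v1}" using e by (rule sym)
    then show ?thesis using v1 v2 by blast
  qed
  show ?thesis unfolding R_TE_def
    by (rule adj_setgraph[where c = "\<lambda>B1 B2. (\<exists>v1\<in>B1 - B2. \<exists>v2\<in>B2 - B1. B1 - {v1} = B2 - {v2})", OF sym assms])
qed

lemma adj_R_TS:
  assumes "B1 \<in> reconf_verts X x G" "B2 \<in> reconf_verts X x G"
  shows "adj (R_TS X x G) B1 B2 \<longleftrightarrow>
    (\<exists>v1\<in>B1 - B2. \<exists>v2\<in>B2 - B1. B1 - {v1} = B2 - {v2} \<and> adj G v1 v2)"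
proof -
  have sym: "(\<exists>v1\<in>B2 - B1. \<exists>v2\<in>B1 - B2. B2 - {v1} = B1 - {v2} \<and> adj G v1 v2)"
    if "(\<exists>v1\<in>B1 - B2. \<exists>v2\<in>B2 - B1. B1 - {v1} = B2 - {v2} \<and> adj G v1 v2)" for B1 B2
  proof -
    from that obtain v1 where v1: "v1\<in>B1 - B2" and ex: "\<exists>v2\<in>B2 - B1. B1 - {v1} = B2 - {v2} \<and> adj G v1 v2" ..
    from ex obtain v2 where v2: "v2\<in>B2 - B1" and e: "B1 - {v1} = B2 - {v2} \<and> adj G v1 v2" ..
    have "B2 - {v2} = B1 - {v1}" using e by simp
    moreover have "adj G v2 v1" using e adj_sym by metis
    ultimately show ?thesis using v1 v2 by blast
  qed
  show ?thesis unfolding R_TS_def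
    by (rule adj_setgraph[where c = "\<lambda>B1 B2. (\<exists>v1\<in>B1 - B2. \<exists>v2\<in>B2 - B1. B1 - {v1} = B2 - {v2} \<and> adj G v1 v2)", OF sym assms])
qed

lemma iso_card:
  assumes "iso R (cart_prod Ys H)" "finite Ys"
  shows "card (verts R) = (\<Prod>Y\<in>Ys. card (verts (H Y)))"
proof -
  obtain h where "bij_betw h (verts R) (verts (cart_prod Ys H))" using assms unfolding iso_def by blast
  then have "card (verts R) = card (PiE Ys (\<lambda>Y. verts (H Y)))"
    unfolding verts_cart using bij_betw_same_card by blast
  also have "\<dots> = (\<Prod>Y\<in>Ys. card (verts (H Y)))" by (rule card_PiE[OF assms(2)])
  finally show ?thesis .
qed

lemma verts_complete: "verts (complete n) = {0..<n}" by (simp add: complete_def verts_def)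
lemma verts_induced: "verts (induced G Y) = Y" by (simp add: induced_def verts_def)
lemma verts_R_TE: "verts (R_TE X x G) = reconf_verts X x G" by (simp add: R_TE_def verts_def)
lemma verts_R_TS: "verts (R_TS X x G) = reconf_verts X x G" by (simp add: R_TS_def verts_def)

theorem theorem3p16:
  fixes G :: "'a graph"
    and X :: "'a graph \<Rightarrow> nat"
    and x :: "'a graph \<Rightarrow> 'a set set \<Rightarrow> bool"
    and Ys :: "'a set set"
  assumes "graph G"
    and "partition_param X x"
    and "partition_on (verts G) Ys"
    and "x G Ys"
    and "card Ys = X G"
  shows "(iso (R_TE X x G) (cart_prod Ys (\<lambda>Y. complete (card Y)))
            \<longleftrightarrow> iso (R_TS X x G) (cart_prod Ys (\<lambda>Y. induced G Y)))
       \<and> (iso (R_TS X x G) (cart_prod Ys (\<lambda>Y. induced G Y))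
            \<longleftrightarrow> (\<forall>P. partition_on (verts G) P \<and> x G P \<and> card P = X G \<longrightarrow> P = Ys))"
proof -
  note g = assms(1) and P = assms(3) and xY = assms(4) and cY = assms(5)
  have fin: "finite (verts G)" using g unfolding graph_def by simp
  have fY: "finite Ys" using part_fin[OF P fin] .
  have finYY: "finite Y" if "Y \<in> Ys" for Y using part_sub(1)[OF P that] fin finite_subset by blast
  define T where "T = {B. transversal G Ys B}"
  define RV where "RV = reconf_verts X x G"
  have tc: "card B = card Q" if "partition_on (verts G) Q" "transversal G Q B" for Q B
    using trans_card[OF that(1) fin] that(2) unfolding transversal_def by blast
  have Tsub: "T \<subseteq> RV"
  proof
    fix B assume "B \<in> T"
    then have t: "transversal G Ys B" unfolding T_def by simp
    then have "card B = X G" using tc[OF P t] cY by simp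
    then show "B \<in> RV" unfolding RV_def reconf_verts_def using P xY t by blast
  qed
  have finR: "finite RV"
  proof (rule finite_subset)
    show "RV \<subseteq> Pow (verts G)" unfolding RV_def reconf_verts_def transversal_def by blast
    show "finite (Pow (verts G))" using fin by simp
  qed
  have cardT: "card T = (\<Prod>Y\<in>Ys. card Y)"
  proof -
    have "bij_betw (\<lambda>B. restrict (\<lambda>Y. id (sel Y B)) Ys) T (PiE Ys (\<lambda>Y. Y))"
      unfolding T_def by (rule bij_phi[OF P]) (simp add: bij_betw_def inj_on_def)
    then have "card T = card (PiE Ys (\<lambda>Y. Y))" using bij_betw_same_card by blast
    also have "\<dots> = (\<Prod>Y\<in>Ys. card Y)" by (rule card_PiE[OF fY])
    finally show ?thesis .
  qed
  define U where "U \<longleftrightarrow> (\<forall>P. partition_on (verts G) P \<and> x G P \<and> card P = X G \<longrightarrow> P = Ys)"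
  have U1: "RV = T" if U unfolding U_def
  proof
    show "T \<subseteq> RV" by (rule Tsub)
    show "RV \<subseteq> T"
    proof
      fix B assume "B \<in> RV"
      then obtain Q where B: "card B = X G" "partition_on (verts G) Q" "x G Q" "transversal G Q B"
        unfolding RV_def reconf_verts_def by blast
      have "card Q = X G" using tc[OF B(2) B(4)] B(1) by simp
      then have "Q = Ys" using that B unfolding U_def by blast
      then show "B \<in> T" using B(4) unfolding T_def by simp
    qed
  qed
  have U2: U if RT: "RV = T"
    unfolding U_def
  proof (intro allI impI)
    fix Q assume Q: "partition_on (verts G) Q \<and> x G Q \<and> card Q = X G"
    show "Q = Ys"
    proof (rule refine_uniq[OF _ P fin])
      show "partition_on (verts G) Q" using Q by simp
      show "card Q = card Ys" using Q cY by simp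
      show "\<forall>B. transversal G Q B \<longrightarrow> transversal G Ys B"
      proof (intro allI impI)
        fix B assume t: "transversal G Q B"
        have "card B = X G" using tc[of Q B] t Q by simp
        then have "B \<in> RV" unfolding RV_def reconf_verts_def using Q t by blast
        then show "transversal G Ys B" using RT unfolding T_def by simp
      qed
    qed
  qed
  have I1: "iso (R_TE X x G) (cart_prod Ys (\<lambda>Y. complete (card Y)))" if RT: "RV = T"
  proof -
    have "\<forall>Y\<in>Ys. \<exists>e. bij_betw e Y {0..<card Y}" using finYY ex_bij_betw_finite_nat by blast
    then obtain E where E: "\<forall>Y\<in>Ys. bij_betw (E Y) Y {0..<card Y}" by metis
    show ?thesis
    proof (rule iso_generic[OF P, where E = E and r = "\<lambda>_ _. True"])
      show "\<forall>Y\<in>Ys. bij_betw (E Y) Y (verts (complete (card Y)))" using E verts_complete by simp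
      show "\<forall>Y\<in>Ys. \<forall>u\<in>Y. \<forall>v\<in>Y. adj (complete (card Y)) (E Y u) (E Y v) \<longleftrightarrow> (True \<and> u \<noteq> v)"
      proof (intro ballI)
        fix Y u v assume Y: "Y \<in> Ys" and u: "u \<in> Y" and v: "v \<in> Y"
        have b: "bij_betw (E Y) Y {0..<card Y}" using E Y by simp
        then have "E Y u < card Y" "E Y v < card Y" using u v bij_betwE by fastforce+
        moreover have "E Y u = E Y v \<longleftrightarrow> u = v" using b u v by (metis bij_betw_def inj_onD)
        ultimately show "adj (complete (card Y)) (E Y u) (E Y v) \<longleftrightarrow> (True \<and> u \<noteq> v)"
          by (simp add: adj_complete)
      qed
      show "verts (R_TE X x G) = {B. transversal G Ys B}" by (simp add: verts_R_TE RT[unfolded RV_def T_def])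
      show "\<forall>B1\<in>verts (R_TE X x G). \<forall>B2\<in>verts (R_TE X x G). adj (R_TE X x G) B1 B2 \<longleftrightarrow>
               (\<exists>v1\<in>B1 - B2. \<exists>v2\<in>B2 - B1. B1 - {v1} = B2 - {v2} \<and> True)"
        unfolding verts_R_TE proof (intro ballI)
        fix B1 B2 assume "B1 \<in> reconf_verts X x G" "B2 \<in> reconf_verts X x G"
        then show "adj (R_TE X x G) B1 B2 \<longleftrightarrow> (\<exists>v1\<in>B1 - B2. \<exists>v2\<in>B2 - B1. B1 - {v1} = B2 - {v2} \<and> True)"
          using adj_R_TE by simp
      qed
    qed
  qed
  have I2: "iso (R_TS X x G) (cart_prod Ys (\<lambda>Y. induced G Y))" if RT: "RV = T"
  proof (rule iso_generic[OF P, where E = "\<lambda>Y. id" and r = "adj G"])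
    show "\<forall>Y\<in>Ys. bij_betw id Y (verts (induced G Y))" by (simp add: verts_induced bij_betw_def)
    show "\<forall>Y\<in>Ys. \<forall>u\<in>Y. \<forall>v\<in>Y. adj (induced G Y) (id u) (id v) \<longleftrightarrow> (adj G u v \<and> u \<noteq> v)"
      by (auto simp: adj_induced dest: adj_irrefl[OF g])
    show "verts (R_TS X x G) = {B. transversal G Ys B}" by (simp add: verts_R_TS RT[unfolded RV_def T_def])
    show "\<forall>B1\<in>verts (R_TS X x G). \<forall>B2\<in>verts (R_TS X x G). adj (R_TS X x G) B1 B2 \<longleftrightarrow>
               (\<exists>v1\<in>B1 - B2. \<exists>v2\<in>B2 - B1. B1 - {v1} = B2 - {v2} \<and> adj G v1 v2)"
      unfolding verts_R_TS proof (intro ballI)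
        fix B1 B2 assume "B1 \<in> reconf_verts X x G" "B2 \<in> reconf_verts X x G"
        then show "adj (R_TS X x G) B1 B2 \<longleftrightarrow> (\<exists>v1\<in>B1 - B2. \<exists>v2\<in>B2 - B1. B1 - {v1} = B2 - {v2} \<and> adj G v1 v2)"
          by (rule adj_R_TS)
      qed
  qed
  have B1: "RV = T" if "iso (R_TE X x G) (cart_prod Ys (\<lambda>Y. complete (card Y)))"
  proof -
    have "card RV = (\<Prod>Y\<in>Ys. card (verts (complete (card Y))))"
      using iso_card[OF that fY] unfolding verts_R_TE RV_def .
    also have "\<dots> = card T" using cardT verts_complete by simp
    finally show ?thesis using card_subset_eq[OF finR Tsub] by simp
  qed
  have B2: "RV = T" if "iso (R_TS X x G) (cart_prod Ys (\<lambda>Y. induced G Y))"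
  proof -
    have "card RV = (\<Prod>Y\<in>Ys. card (verts (induced G Y)))"
      using iso_card[OF that fY] unfolding verts_R_TS RV_def .
    also have "\<dots> = card T" by (simp only: cardT verts_induced)
    finally show ?thesis using card_subset_eq[OF finR Tsub] by simp
  qed
  show ?thesis using U1 U2 I1 I2 B1 B2 unfolding U_def by blast
qed

end
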